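(* Let $p$ be a prime, let $g:\mathbb{Z}_p\to[0,1]$ be any function, let $a_1,a_2,\dots,a_k\in\mathbb{Z}_p\setminus\{0\}$ be $k$ non-zero elements, and let $E\ge 0$ be an integer. Then at least one of the following two conclusions holds. (1) (Vanishing generalized balanced function.) There exists a function $h:\mathbb{Z}_p\to[-1,1]$ such that $h(n)\ge 0$ for every $n\in\mathrm{support}(g)$, $h(n)\le 0$ for every $n\notin\mathrm{support}(g)$, $\sum_{n\in\mathbb{Z}_p} h(n)=0$, $\|h\|_1=\sum_{n\in\mathbb{Z}_p}|h(n)|\ge E$, and $\hat h(a_1)=\hat h(a_2)=\cdots=\hat h(a_k)=0$. (2) (Generalized balanced function with small spectral support.) There exists a function $h:\mathbb{Z}_p\to\mathbb{R}$ with $$\mathrm{support}(\hat h)\subseteq\{0\}\cup\{a_1,\dots,a_k\}\cup\{-a_1,\dots,-a_k\},$$ such that, for all but at most $(2k+1)E$ elements $n\in\mathbb{Z}_p$, we have $h(n)>0$ if $n\in\mathrm{support}(g)$ and $h(n)<0$ if $n\notin\mathrm{support}(g)$.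
   Context: $\mathbb{Z}_p=\mathbb{Z}/p\mathbb{Z}$. For a function $f:\mathbb{Z}_p\to\mathbb{C}$, its Fourier transform is $\hat f(a)=\sum_{n\in\mathbb{Z}_p} f(n)\,\omega^{an}$ for $a\in\mathbb{Z}_p$, where $\omega=e^{2\pi i/p}$. For a function $f$, $\mathrm{support}(f)=\{x: f(x)\neq 0\}$, and $\mathrm{support}(g)^c=\mathbb{Z}_p\setminus\mathrm{support}(g)$. *)

theory Defs
  imports "HOL-Analysis.Analysis"
begin

text \<open>Z_p is modelled by the residues {0..<p} :: nat set; functions on Z_p are
functions nat \<Rightarrow> real whose values matter only on {0..<p}.\<close>

definition zp :: "nat \<Rightarrow> nat set" where
  "zp p = {0..<p}"

definition fourier :: "nat \<Rightarrow> (nat \<Rightarrow> real) \<Rightarrow> nat \<Rightarrow> complex" where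
  "fourier p f a = (\<Sum>n\<in>zp p. complex_of_real (f n) * cis (2 * pi * real ((a * n) mod p) / real p))"

definition supp_on :: "nat \<Rightarrow> (nat \<Rightarrow> 'b::zero) \<Rightarrow> nat set" where
  "supp_on p f = {x \<in> zp p. f x \<noteq> 0}"

definition neg_mod :: "nat \<Rightarrow> nat \<Rightarrow> nat" where
  "neg_mod p a = (p - a) mod p"

end

theory Submission
  imports Defs
begin

definition QQ :: "nat \<Rightarrow> (nat\<Rightarrow>nat) \<Rightarrow> nat \<Rightarrow> (nat\<Rightarrow>real) \<Rightarrow> real" where
  "QQ p a k h = (\<Sum>n\<in>zp p. h n)^2 + (\<Sum>i\<in>{1..k}. (cmod (fourier p h (a i)))^2)"
definition BB :: "nat \<Rightarrow> (nat\<Rightarrow>nat) \<Rightarrow> nat \<Rightarrow> (nat\<Rightarrow>real) \<Rightarrow> (nat\<Rightarrow>real) \<Rightarrow> real" where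
  "BB p a k u d = (\<Sum>n\<in>zp p. u n) * (\<Sum>n\<in>zp p. d n) + (\<Sum>i\<in>{1..k}. Re (fourier p u (a i) * cnj (fourier p d (a i))))"
definition ff :: "nat \<Rightarrow> (nat\<Rightarrow>nat) \<Rightarrow> nat \<Rightarrow> (nat\<Rightarrow>real) \<Rightarrow> nat \<Rightarrow> real" where
  "ff p a k u n = (\<Sum>m\<in>zp p. u m) + (\<Sum>i\<in>{1..k}. Re (fourier p u (a i) * cnj (cis (2 * pi * real ((a i * n) mod p) / real p))))"

lemma fourier_lin: "fourier p (\<lambda>n. u n + t * d n) b = fourier p u b + complex_of_real t * fourier p d b"
  unfolding fourier_def by (simp add: sum.distrib sum_distrib_left algebra_simps)

lemma cmod_lin: "(cmod (A + complex_of_real t * C))^2 = (cmod A)^2 + 2*t*Re (A * cnj C) + t^2 * (cmod C)^2"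
  unfolding cmod_power2 by (simp add: power2_eq_square algebra_simps)

lemma QQ_expand: "QQ p a k (\<lambda>n. u n + t * d n) = QQ p a k u + 2*t*BB p a k u d + t^2 * QQ p a k d"
proof -
  have s: "(\<Sum>n\<in>zp p. u n + t * d n) = (\<Sum>n\<in>zp p. u n) + t * (\<Sum>n\<in>zp p. d n)"
    by (simp only: sum.distrib sum_distrib_left)
  have h1: "(X + t * Y)^2 = X^2 + 2*t*(X*Y) + t^2 * Y^2" for X Y :: real
    by (simp add: power2_sum power_mult_distrib algebra_simps)
  have h2: "(\<Sum>i\<in>{1..k}. (cmod (fourier p u (a i)))^2 + 2*t*Re (fourier p u (a i) * cnj (fourier p d (a i))) + t^2 * (cmod (fourier p d (a i)))^2)
     = (\<Sum>i\<in>{1..k}. (cmod (fourier p u (a i)))^2) + 2*t*(\<Sum>i\<in>{1..k}. Re (fourier p u (a i) * cnj (fourier p d (a i)))) + t^2 * (\<Sum>i\<in>{1..k}. (cmod (fourier p d (a i)))^2)"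
    by (simp only: sum.distrib sum_distrib_left)
  show ?thesis
    unfolding QQ_def BB_def fourier_lin cmod_lin s h1 h2
    by (simp add: algebra_simps)
qed

lemma QQ_BB: "QQ p a k u = BB p a k u u"
  unfolding QQ_def BB_def cmod_power2 by (simp add: power2_eq_square)

lemma BB_ff: "BB p a k u d = (\<Sum>n\<in>zp p. d n * ff p a k u n)"
proof -
  have "(\<Sum>i\<in>{1..k}. Re (fourier p u (a i) * cnj (fourier p d (a i))))
     = (\<Sum>i\<in>{1..k}. \<Sum>n\<in>zp p. d n * Re (fourier p u (a i) * cnj (cis (2 * pi * real ((a i * n) mod p) / real p))))"
    unfolding fourier_def[of p d] by (simp add: sum_distrib_left algebra_simps)
  also have "\<dots> = (\<Sum>n\<in>zp p. d n * (\<Sum>i\<in>{1..k}. Re (fourier p u (a i) * cnj (cis (2 * pi * real ((a i * n) mod p) / real p)))))"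
    by (subst sum.swap) (simp add: sum_distrib_left)
  finally have X: "(\<Sum>i\<in>{1..k}. Re (fourier p u (a i) * cnj (fourier p d (a i)))) = (\<Sum>n\<in>zp p. d n * (\<Sum>i\<in>{1..k}. Re (fourier p u (a i) * cnj (cis (2 * pi * real ((a i * n) mod p) / real p)))))" .
  have Y: "(\<Sum>n\<in>zp p. d n * ((\<Sum>m\<in>zp p. u m) + Z n)) = (\<Sum>m\<in>zp p. u m) * (\<Sum>n\<in>zp p. d n) + (\<Sum>n\<in>zp p. d n * Z n)" for Z
    by (simp add: distrib_left sum.distrib mult.commute flip: sum_distrib_right)
  show ?thesis unfolding BB_def ff_def Y X ..

qed

definition ee :: "nat \<Rightarrow> int \<Rightarrow> complex" where
  "ee p m = cis (2 * pi * of_int m / real p)"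

lemma ee_add: "ee p (m + m') = ee p m * ee p m'"
  unfolding ee_def cis_mult by (simp add: add_divide_distrib algebra_simps)

lemma ee_cnj: "cnj (ee p m) = ee p (- m)"
  unfolding ee_def cis_cnj by simp

lemma ee_mult_p: "p > 0 \<Longrightarrow> ee p (int p * j) = 1"
proof -
  assume "p > 0"
  then have "2 * pi * of_int (int p * j) / real p = 2 * pi * of_int j" by simp
  then show ?thesis unfolding ee_def by simp
qed

lemma ee_cong: assumes "p > 0" "m mod int p = m' mod int p" shows "ee p m = ee p m'"
proof -
  obtain j where "m = m' + int p * j"
    using assms(2) by (metis mod_eqE)
  then show ?thesis using ee_add ee_mult_p[OF assms(1)] by simp
qed

lemma ee_pow: "ee p c ^ n = ee p (c * int n)"
proof (induct n)
  case 0 then show ?case by (simp add: ee_def)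
next
  case (Suc n)
  have "c * int (Suc n) = c * int n + c" by (simp add: algebra_simps)
  then show ?case using Suc by (simp add: ee_add mult.commute)
qed

lemma ee_eq_1: assumes "p > 0" "ee p c = 1" shows "int p dvd c"
proof -
  have "cos (2 * pi * of_int c / real p) = 1"
    using assms(2) unfolding ee_def complex_eq_iff by simp
  then obtain n :: int where n: "2 * pi * of_int c / real p = of_int n * 2 * pi"
    using cos_one_2pi_int by blast
  then have "of_int c = of_int n * real p" using assms(1) by (simp add: field_simps)
  then have "c = n * int p" by (metis of_int_eq_iff of_int_mult of_int_of_nat_eq)
  then show ?thesis by simp
qed

lemma ee_sum: assumes "p > 0" "\<not> int p dvd c" shows "(\<Sum>n<p. ee p (c * int n)) = 0"
proof -
  have ne: "ee p c \<noteq> 1" using ee_eq_1 assms by blast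
  have "ee p c ^ p = 1" unfolding ee_pow using ee_mult_p[OF assms(1), of c] by (simp add: mult.commute)
  then show ?thesis using sum_gp_strict[of "ee p c" p] ne by (simp add: ee_pow)
qed

lemma cis_ee: "p > 0 \<Longrightarrow> cis (2 * pi * real ((x * n) mod p) / real p) = ee p (int x * int n)"
proof -
  assume p: "p > 0"
  have "cis (2 * pi * real ((x * n) mod p) / real p) = ee p (int ((x * n) mod p))"
    unfolding ee_def by simp
  also have "\<dots> = ee p (int x * int n)"
    by (rule ee_cong[OF p]) (simp add: zmod_int)
  finally show ?thesis .
qed

lemma of_real_Re: "complex_of_real (Re z) = (z + cnj z) / 2"
  by (simp add: complex_add_cnj)

lemma ndvd_diff: assumes "x < p" "y < p" "x \<noteq> y" shows "\<not> int p dvd (int x - int y)"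
proof
  assume "int p dvd (int x - int y)"
  then obtain j where j: "int x - int y = int p * j" by blast
  have "j \<noteq> 0" using j assms by auto
  then have "\<bar>int p * j\<bar> \<ge> int p" by (simp add: abs_mult) (metis abs_ge_zero mult_le_cancel_left1 of_nat_0_le_iff zero_less_abs_iff int_one_le_iff_zero_less abs_of_nat mult.commute nat_mult_1_right less_le_not_le)
  then show False using j assms by linarith
qed

lemma ndvd_sum: assumes "x < p" "y < p" "0 < y" "x \<noteq> p - y" shows "\<not> int p dvd (int x + int y)"
proof
  assume "int p dvd (int x + int y)"
  then obtain j where j: "int x + int y = int p * j" by blast
  have pp: "0 < int p" using assms by auto
  have "int x + int y < int p * 2" "0 < int x + int y" using assms by linarith+
  then have "0 < int p * j" "int p * j < int p * 2" using j by simp_all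
  then have "0 < j" "j < 2" using pp mult_less_cancel_left_pos[OF pp, of j 2] by (auto simp: zero_less_mult_iff)
  then have "j = 1" by simp
  then show False using j assms by auto
qed

lemma ff_spec:
  assumes p: "p > 0" and a: "\<forall>i\<in>{1..k}. a i \<in> zp p - {0}" and b: "b \<in> zp p" "b \<noteq> 0"
    and nb: "\<forall>i\<in>{1..k}. b \<noteq> a i \<and> b \<noteq> neg_mod p (a i)"
  shows "fourier p (ff p a k u) b = 0"
proof -
  define c0 where "c0 = (\<Sum>m\<in>zp p. u m)"
  define U where "U i = fourier p u (a i)" for i
  have pt: "complex_of_real (ff p a k u n) * cis (2 * pi * real ((b * n) mod p) / real p)
     = complex_of_real c0 * ee p (int b * int n) + (\<Sum>i\<in>{1..k}. U i / 2 * ee p ((int b - int (a i)) * int n)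
         + cnj (U i) / 2 * ee p ((int b + int (a i)) * int n))" for n
  proof -
    have e1: "ee p (- (int (a i) * int n)) * ee p (int b * int n) = ee p ((int b - int (a i)) * int n)" for i
      by (simp add: ee_add[symmetric] algebra_simps)
    have e2: "ee p (int (a i) * int n) * ee p (int b * int n) = ee p ((int b + int (a i)) * int n)" for i
      by (simp add: ee_add[symmetric] algebra_simps)
    have "complex_of_real (ff p a k u n) = complex_of_real c0 + (\<Sum>i\<in>{1..k}. (U i * ee p (- (int (a i) * int n)) + cnj (U i) * ee p (int (a i) * int n)) / 2)"
      unfolding ff_def c0_def U_def cis_ee[OF p] of_real_add of_real_sum of_real_Re
      by (simp add: ee_cnj)
    moreover have "(U i * ee p (- (int (a i) * int n)) + cnj (U i) * ee p (int (a i) * int n)) / 2 * ee p (int b * int n)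
        = U i / 2 * ee p ((int b - int (a i)) * int n) + cnj (U i) / 2 * ee p ((int b + int (a i)) * int n)" for i
      unfolding e1[symmetric] e2[symmetric] by (simp add: algebra_simps)
    ultimately show ?thesis unfolding cis_ee[OF p]
      by (simp add: sum_distrib_right distrib_right add_divide_distrib)
  qed
  have zp: "zp p = {..<p}" unfolding zp_def by auto
  have s0: "(\<Sum>n\<in>zp p. ee p (int b * int n)) = 0"
  proof -
    have "\<not> int p dvd int b" using b nat_dvd_not_less[of b p] unfolding zp_def by auto
    then show ?thesis using ee_sum[OF p, of "int b"] unfolding zp by auto
  qed
  have s1: "(\<Sum>n\<in>zp p. ee p ((int b - int (a i)) * int n)) = 0" if "i \<in> {1..k}" for i
    unfolding zp using ee_sum[OF p] ndvd_diff[of b p "a i"] a b nb that unfolding zp_def by auto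
  have s2: "(\<Sum>n\<in>zp p. ee p ((int b + int (a i)) * int n)) = 0" if "i \<in> {1..k}" for i
  proof -
    have ai: "a i < p" "0 < a i" using a that unfolding zp_def by auto
    then have "p - a i < p" by simp
    then have "neg_mod p (a i) = p - a i" unfolding neg_mod_def by simp
    moreover have "b \<noteq> neg_mod p (a i)" using nb that by blast
    ultimately have "b \<noteq> p - a i" by simp
    then have "\<not> int p dvd (int b + int (a i))" using ndvd_sum[of b p "a i"] ai b unfolding zp_def by auto
    then show ?thesis unfolding zp using ee_sum[OF p] by blast
  qed
  have "fourier p (ff p a k u) b = complex_of_real c0 * (\<Sum>n\<in>zp p. ee p (int b * int n))
     + (\<Sum>i\<in>{1..k}. U i / 2 * (\<Sum>n\<in>zp p. ee p ((int b - int (a i)) * int n))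
         + cnj (U i) / 2 * (\<Sum>n\<in>zp p. ee p ((int b + int (a i)) * int n)))"
    unfolding fourier_def pt by (simp add: sum.distrib sum_distrib_left sum.swap[of _ "zp p"])
  also have "\<dots> = 0" using s0 s1 s2 by simp
  finally show ?thesis .
qed

lemma cont_coord [continuous_intros]: "continuous_on S (\<lambda>x::nat\<Rightarrow>real. x n)"
  by (rule continuous_on_subset[OF continuous_on_product_coordinates]) simp

lemma cont_QQ: "continuous_on S (\<lambda>x::nat\<Rightarrow>real. QQ p a k (\<lambda>n. sg n * x n))"
  unfolding QQ_def fourier_def by (intro continuous_intros)

lemma exists_min:
  fixes sg :: "nat \<Rightarrow> real"
  assumes "E \<le> p"
  defines "F \<equiv> {x::nat\<Rightarrow>real. (\<forall>n. (n < p \<longrightarrow> 0 \<le> x n \<and> x n \<le> 1) \<and> (\<not> n < p \<longrightarrow> x n = 0)) \<and> (\<Sum>n\<in>zp p. x n) = real E}"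
  shows "\<exists>x\<in>F. \<forall>y\<in>F. QQ p a k (\<lambda>n. sg n * x n) \<le> QQ p a k (\<lambda>n. sg n * y n)"
proof (rule continuous_attains_inf)
  define S0 where "S0 n = (if n < p then {0..1} else {0::real})" for n
  have "compactin (product_topology (\<lambda>_. euclidean) UNIV) (PiE UNIV S0)"
    unfolding compactin_PiE by (simp add: S0_def)
  then have c1: "compact (PiE UNIV S0)" by (simp add: euclidean_product_topology)
  have c2: "closed {x::nat\<Rightarrow>real. (\<Sum>n\<in>zp p. x n) = real E}"
    by (intro closed_Collect_eq continuous_intros)
  have "F = PiE UNIV S0 \<inter> {x::nat\<Rightarrow>real. (\<Sum>n\<in>zp p. x n) = real E}"
  proof (rule set_eqI)
    fix x :: "nat \<Rightarrow> real"
    have mem: "(x n \<in> S0 n) = ((n<p \<longrightarrow> 0 \<le> x n \<and> x n \<le> 1) \<and> (\<not>n<p \<longrightarrow> x n = 0))" for n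
      by (simp add: S0_def)
    show "x \<in> F \<longleftrightarrow> x \<in> PiE UNIV S0 \<inter> {x::nat\<Rightarrow>real. (\<Sum>n\<in>zp p. x n) = real E}"
      unfolding F_def PiE_UNIV_domain Pi_def mem_Collect_eq Int_iff mem by simp
  qed
  then show "compact F" using c1 c2 by (simp add: compact_Int_closed)
  define x0 where "x0 n = (if n < E then 1 else 0::real)" for n
  have "(\<Sum>n\<in>zp p. x0 n) = real (card {n. n < E})"
  proof -
    have "(\<Sum>n\<in>zp p. x0 n) = (\<Sum>n\<in>{..<E}. 1)"
      unfolding x0_def zp_def using assms(1) by (intro sum.mono_neutral_cong_right) auto
    then show ?thesis by simp
  qed
  then have "x0 \<in> F" unfolding F_def x0_def using assms(1) by auto
  then show "F \<noteq> {}" by blast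
  show "continuous_on F (\<lambda>x. QQ p a k (\<lambda>n. sg n * x n))" by (rule cont_QQ)
qed

lemma quad_nonneg:
  fixes b q :: real
  assumes h: "\<And>t. 0 < t \<Longrightarrow> t \<le> 1 \<Longrightarrow> 0 \<le> 2*t*b + t^2*q" and q: "0 \<le> q"
  shows "0 \<le> b"
proof (rule ccontr)
  assume "\<not> 0 \<le> b"
  then have b: "b < 0" by simp
  show False
  proof (cases "q \<le> - b")
    case True
    then show False using h[of 1] b by simp
  next
    case False
    define t where "t = - b / q"
    have q0: "q > 0" using False b by simp
    have t0: "0 < t" "t \<le> 1" using False b q0 unfolding t_def by (auto simp: field_simps)
    have "2*t*b + t^2*q = t * b" unfolding t_def using q0 by (simp add: field_simps power2_eq_square)
    moreover have "t * b < 0" using t0 b by (simp add: mult_pos_neg)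
    ultimately show False using h[OF t0] by linarith
  qed
qed

lemma QQ_nonneg: "0 \<le> QQ p a k h"
  unfolding QQ_def by (intro add_nonneg_nonneg sum_nonneg) auto

theorem theorem1:
  fixes p :: nat and g :: "nat \<Rightarrow> real" and a :: "nat \<Rightarrow> nat" and k :: nat and E :: nat
  assumes "prime p"
    and "\<forall>n\<in>zp p. 0 \<le> g n \<and> g n \<le> 1"
    and "\<forall>i\<in>{1..k}. a i \<in> zp p - {0}"
  shows "(\<exists>h :: nat \<Rightarrow> real.
            (\<forall>n\<in>zp p. -1 \<le> h n \<and> h n \<le> 1)
          \<and> (\<forall>n\<in>supp_on p g. h n \<ge> 0)
          \<and> (\<forall>n\<in>zp p - supp_on p g. h n \<le> 0)
          \<and> (\<Sum>n\<in>zp p. h n) = 0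
          \<and> (\<Sum>n\<in>zp p. \<bar>h n\<bar>) \<ge> real E
          \<and> (\<forall>i\<in>{1..k}. fourier p h (a i) = 0))
       \<or> (\<exists>h :: nat \<Rightarrow> real.
            supp_on p (fourier p h) \<subseteq> {0} \<union> a ` {1..k} \<union> (\<lambda>i. neg_mod p (a i)) ` {1..k}
          \<and> card {n \<in> zp p. \<not> ((n \<in> supp_on p g \<longrightarrow> h n > 0) \<and> (n \<notin> supp_on p g \<longrightarrow> h n < 0))}
              \<le> (2 * k + 1) * E)"
proof -
  have p0: "p > 0" using assms(1) prime_gt_0_nat by blast
  have finzp: "finite (zp p)" unfolding zp_def by simp
  define sg where "sg n = (if n \<in> supp_on p g then 1 else -1::real)" for n
  show ?thesis
  proof (cases "E \<le> p")
    case False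
    have "fourier p (\<lambda>_. 0) b = 0" for b unfolding fourier_def by simp
    then have "supp_on p (fourier p (\<lambda>_. 0)) = {}" unfolding supp_on_def by simp
    moreover have "card {n \<in> zp p. \<not> ((n \<in> supp_on p g \<longrightarrow> (0::real) > 0) \<and> (n \<notin> supp_on p g \<longrightarrow> (0::real) < 0))} \<le> (2 * k + 1) * E"
    proof -
      have "card {n \<in> zp p. \<not> ((n \<in> supp_on p g \<longrightarrow> (0::real) > 0) \<and> (n \<notin> supp_on p g \<longrightarrow> (0::real) < 0))} \<le> card (zp p)"
        by (rule card_mono[OF finzp]) auto
      also have "\<dots> = p" unfolding zp_def by simp
      also have "\<dots> \<le> (2 * k + 1) * E" using False by simp
      finally show ?thesis .
    qed
    ultimately show ?thesis by (intro disjI2 exI[of _ "\<lambda>_. 0"]) auto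
  next
    case True
    define F where "F = {x::nat\<Rightarrow>real. (\<forall>n. (n < p \<longrightarrow> 0 \<le> x n \<and> x n \<le> 1) \<and> (\<not> n < p \<longrightarrow> x n = 0)) \<and> (\<Sum>n\<in>zp p. x n) = real E}"
    obtain x where xF: "x \<in> F" and xmin: "\<And>y. y \<in> F \<Longrightarrow> QQ p a k (\<lambda>n. sg n * x n) \<le> QQ p a k (\<lambda>n. sg n * y n)"
      using exists_min[OF True, of a k sg] unfolding F_def by blast
    define u where "u n = sg n * x n" for n
    have xb: "0 \<le> x n" "x n \<le> 1" if "n \<in> zp p" for n using xF that unfolding F_def zp_def by auto
    have xs: "(\<Sum>n\<in>zp p. x n) = real E" using xF unfolding F_def by auto
    show ?thesis
    proof (cases "QQ p a k u = 0")
      case True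
      have sq: "(\<Sum>n\<in>zp p. u n)^2 = 0 \<and> (\<Sum>i\<in>{1..k}. (cmod (fourier p u (a i)))^2) = 0"
        using True QQ_def[of p a k u] by (smt (verit) sum_nonneg zero_le_power2)
      then have s0: "(\<Sum>n\<in>zp p. u n) = 0" by simp
      have f0: "\<forall>i\<in>{1..k}. fourier p u (a i) = 0"
        using sq by (subst (asm) sum_nonneg_eq_0_iff) auto
      have ab: "\<bar>u n\<bar> = x n" if "n \<in> zp p" for n using xb[OF that] unfolding u_def sg_def by auto
      have l1: "(\<Sum>n\<in>zp p. \<bar>u n\<bar>) = real E" using xs ab by simp
      have "(\<forall>n\<in>zp p. -1 \<le> u n \<and> u n \<le> 1)" using ab xb by (smt (verit))
      moreover have "\<forall>n\<in>supp_on p g. u n \<ge> 0" using xb unfolding u_def sg_def supp_on_def by auto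
      moreover have "\<forall>n\<in>zp p - supp_on p g. u n \<le> 0" using xb unfolding u_def sg_def by auto
      ultimately show ?thesis using s0 l1 f0 by (intro disjI1 exI[of _ u]) auto
    next
      case False
      have m: "QQ p a k u > 0" using False QQ_nonneg[of p a k u] by simp
      have key: "BB p a k u (\<lambda>n. sg n * y n) \<ge> QQ p a k u" if yF: "y \<in> F" for y
      proof -
        define d where "d n = sg n * y n - u n" for n
        have "0 \<le> 2*t*BB p a k u d + t^2*QQ p a k d" if t: "0 < t" "t \<le> 1" for t
        proof -
          define z where "z n = x n + t * (y n - x n)" for n
          have yn: "(n < p \<longrightarrow> 0 \<le> y n \<and> y n \<le> 1) \<and> (\<not> n < p \<longrightarrow> y n = 0)" for n using yF unfolding F_def by blast
          have yb: "0 \<le> y n" "y n \<le> 1" "\<not> n < p \<Longrightarrow> y n = 0" for n using yn[of n] by (cases "n < p"; simp)+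
          have xn: "(n < p \<longrightarrow> 0 \<le> x n \<and> x n \<le> 1) \<and> (\<not> n < p \<longrightarrow> x n = 0)" for n using xF unfolding F_def by blast
          have xb': "0 \<le> x n" "x n \<le> 1" "\<not> n < p \<Longrightarrow> x n = 0" for n using xn[of n] by (cases "n < p"; simp)+
          have "z \<in> F"
          proof -
            have "0 \<le> z n \<and> z n \<le> 1" for n
            proof -
              have "z n = (1 - t) * x n + t * y n" unfolding z_def by (simp add: algebra_simps)
              moreover have "0 \<le> (1 - t) * x n" "0 \<le> t * y n" using t xb' yb by auto
              moreover have "(1 - t) * x n \<le> 1 - t" "t * y n \<le> t" using t xb'(2) yb(2)
                by (auto simp: mult_left_le)
              ultimately show ?thesis by linarith
            qed
            moreover have "\<not> n < p \<Longrightarrow> z n = 0" for n unfolding z_def using xb' yb by simp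
            moreover have "(\<Sum>n\<in>zp p. z n) = real E"
            proof -
              have "(\<Sum>n\<in>zp p. z n) = (\<Sum>n\<in>zp p. x n) + t * ((\<Sum>n\<in>zp p. y n) - (\<Sum>n\<in>zp p. x n))"
                unfolding z_def by (simp add: sum.distrib sum_distrib_left sum_subtractf algebra_simps)
              then show ?thesis using xs yF unfolding F_def by simp
            qed
            ultimately show ?thesis unfolding F_def by auto
          qed
          then have "QQ p a k u \<le> QQ p a k (\<lambda>n. sg n * z n)" using xmin unfolding u_def by blast
          also have "(\<lambda>n. sg n * z n) = (\<lambda>n. u n + t * d n)"
            unfolding z_def d_def u_def by (rule ext) (simp add: algebra_simps)
          finally show ?thesis unfolding QQ_expand by simp
        qed
        then have "0 \<le> BB p a k u d" using quad_nonneg QQ_nonneg by blast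
        also have "BB p a k u d = BB p a k u (\<lambda>n. sg n * y n) - BB p a k u u"
          unfolding BB_ff d_def by (simp add: left_diff_distrib sum_subtractf)
        finally show ?thesis unfolding QQ_BB by simp
      qed
      define f where "f = ff p a k u"
      have spec: "supp_on p (fourier p f) \<subseteq> {0} \<union> a ` {1..k} \<union> (\<lambda>i. neg_mod p (a i)) ` {1..k}"
      proof
        fix b assume b: "b \<in> supp_on p (fourier p f)"
        show "b \<in> {0} \<union> a ` {1..k} \<union> (\<lambda>i. neg_mod p (a i)) ` {1..k}"
        proof (rule ccontr)
          assume nb: "b \<notin> {0} \<union> a ` {1..k} \<union> (\<lambda>i. neg_mod p (a i)) ` {1..k}"
          have "fourier p f b = 0" unfolding f_def
            by (rule ff_spec[OF p0 assms(3)]) (use b nb in \<open>auto simp: supp_on_def\<close>)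
          then show False using b unfolding supp_on_def by simp
        qed
      qed
      define N where "N = {n \<in> zp p. \<not> ((n \<in> supp_on p g \<longrightarrow> f n > 0) \<and> (n \<notin> supp_on p g \<longrightarrow> f n < 0))}"
      have finN: "finite N" unfolding N_def using finzp by simp
      have Nneg: "sg n * f n \<le> 0" if "n \<in> N" for n using that unfolding N_def sg_def by auto
      have cN: "card N < E"
      proof (rule ccontr)
        assume "\<not> card N < E"
        then obtain N' where N': "N' \<subseteq> N" "card N' = E" using obtain_subset_with_card_n[of E N] by auto
        have N'zp: "N' \<subseteq> zp p" using N' unfolding N_def by auto
        have finN': "finite N'" using N'(1) finN finite_subset by blast
        define y where "y n = (if n \<in> N' then 1 else 0::real)" for n
        have "(\<Sum>n\<in>zp p. y n) = (\<Sum>n\<in>N'. 1)"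
          unfolding y_def using N'zp finzp by (intro sum.mono_neutral_cong_right) auto
        then have "y \<in> F" unfolding F_def y_def using N'(2) N'zp unfolding zp_def by auto
        then have "QQ p a k u \<le> BB p a k u (\<lambda>n. sg n * y n)" by (rule key)
        also have "BB p a k u (\<lambda>n. sg n * y n) = (\<Sum>n\<in>N'. sg n * f n)"
          unfolding BB_ff f_def[symmetric] y_def using N'zp finzp
          by (intro sum.mono_neutral_cong_right) auto
        also have "\<dots> \<le> 0" using Nneg N'(1) by (intro sum_nonpos) auto
        finally show False using m by simp
      qed
      have "card N \<le> (2 * k + 1) * E" using cN by simp
      then show ?thesis using spec unfolding N_def by (intro disjI2 exI[of _ f]) auto
    qed
  qed
qed

end
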